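(* Let $A\in\mathbb{R}_+^{n\times n}$ be irreducible and let $x>0$ be a Perron eigenvector of $A$. Then $$\rho(A)=\max_{B\in\Omega(A)}\rho(B)\iff\big(\forall\,1\le i,j,k\le n:\ x_k<x_j\Rightarrow a_{i,k}\le a_{i,j}\big),$$ and $$\rho(A)=\min_{B\in\Omega(A)}\rho(B)\iff\big(\forall\,1\le i,j,k\le n:\ x_k<x_j\Rightarrow a_{i,k}\ge a_{i,j}\big).$$
   Context: For $A=(a_{i,j})\in\mathbb{R}_+^{n\times n}$ (nonnegative $n\times n$ matrices), $\Omega(A)=\{B\in\mathbb{R}_+^{n\times n}:\ \forall i\ \exists\text{ a permutation }\phi_i\text{ of }\{1,\dots,n\}\text{ with } b_{i,j}=a_{i,\phi_i(j)}\ \forall j\}$. $\rho(B)$ denotes the spectral radius (Perron root) of $B$. A Perron eigenvector of $A$ is a nonzero nonnegative vector $x$ with $Ax=\rho(A)x$. *)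

theory Defs
  imports "Jordan_Normal_Form.Spectral_Radius" "HOL-Combinatorics.Permutations"
begin

text \<open>Nonnegative n x n real matrices are represented as \<open>real mat\<close> in
  \<open>carrier_mat n n\<close> with all entries \<open>\<ge> 0\<close>; indices run over \<open>{0..<n}\<close>.\<close>

definition nonneg_mat :: "real mat \<Rightarrow> bool" where
  "nonneg_mat A \<longleftrightarrow> (\<forall>i < dim_row A. \<forall>j < dim_col A. A $$ (i,j) \<ge> 0)"

definition rho :: "real mat \<Rightarrow> real" where
  "rho A = spectral_radius (map_mat complex_of_real A)"

definition irreducible_mat :: "real mat \<Rightarrow> bool" where
  "irreducible_mat A \<longleftrightarrow> (\<forall>i < dim_row A. \<forall>j < dim_row A. i \<noteq> j \<longrightarrow>
      (\<exists>k. (A ^\<^sub>m k) $$ (i,j) > 0))"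

definition Omega :: "real mat \<Rightarrow> real mat set" where
  "Omega A = {B. B \<in> carrier_mat (dim_row A) (dim_col A) \<and> nonneg_mat B \<and>
      (\<forall>i < dim_row A. \<exists>\<phi>. \<phi> permutes {..<dim_col A} \<and>
          (\<forall>j < dim_col A. B $$ (i,j) = A $$ (i, \<phi> j)))}"

definition perron_eigenvector :: "real mat \<Rightarrow> real vec \<Rightarrow> bool" where
  "perron_eigenvector A x \<longleftrightarrow> x \<in> carrier_vec (dim_col A) \<and> x \<noteq> 0\<^sub>v (dim_col A) \<and>
     (\<forall>i < dim_vec x. x $ i \<ge> 0) \<and> A *\<^sub>v x = rho A \<cdot>\<^sub>v x"

end

theory Submission
  imports Defs
begin

lemma mv: fixes M :: "'a::comm_semiring_0 mat"
  assumes "M \<in> carrier_mat n n" "v \<in> carrier_vec n" "l < n"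
  shows "(M *\<^sub>v v) $ l = (\<Sum>q<n. M $$ (l,q) * v $ q)"
  using assms by (auto simp: scalar_prod_def row_def lessThan_atLeast0 intro!: sum.cong)

lemma pow_Suc_left: fixes M :: "'a::semiring_1 mat"
  assumes M: "M \<in> carrier_mat n n"
  shows "M ^\<^sub>m Suc p = M * M ^\<^sub>m p"
proof (induction p)
  case 0 then show ?case using M by simp
next
  case (Suc p)
  have "M ^\<^sub>m Suc (Suc p) = (M * M ^\<^sub>m p) * M" using Suc by simp
  also have "\<dots> = M * (M ^\<^sub>m p * M)" using M by (simp add: assoc_mult_mat[of _ n n _ n _ n])
  finally show ?case by simp
qed

lemma pow_one_mv: fixes M :: "'a::semiring_1 mat"
  assumes M: "M \<in> carrier_mat n n" shows "M ^\<^sub>m 1 = M"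
  using M by simp

lemma pow_add_mat: fixes M :: "'a::semiring_1 mat"
  assumes M: "M \<in> carrier_mat n n"
  shows "M ^\<^sub>m (a + b) = M ^\<^sub>m a * M ^\<^sub>m b"
proof (induction b)
  case 0 then show ?case using M by simp
next
  case (Suc b)
  have "M ^\<^sub>m (a + Suc b) = (M ^\<^sub>m a * M ^\<^sub>m b) * M" using Suc by simp
  also have "\<dots> = M ^\<^sub>m a * (M ^\<^sub>m b * M)" using M by (simp add: assoc_mult_mat[of _ n n _ n _ n])
  finally show ?case by simp
qed

definition nnm :: "real mat \<Rightarrow> nat \<Rightarrow> bool" where
  "nnm M n \<longleftrightarrow> (\<forall>i<n. \<forall>j<n. M $$ (i,j) \<ge> 0)"

lemma nnm_pow: assumes M: "M \<in> carrier_mat n n" and nn: "nnm M n"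
  shows "nnm (M ^\<^sub>m p) n"
proof (induction p)
  case 0 then show ?case using M by (auto simp: nnm_def)
next
  case (Suc p)
  show ?case unfolding nnm_def
  proof (intro allI impI)
    fix i j assume ij: "i < n" "j < n"
    have "(M ^\<^sub>m Suc p) $$ (i,j) = (\<Sum>q<n. (M ^\<^sub>m p) $$ (i,q) * M $$ (q,j))"
      using ij M by (auto simp: scalar_prod_def row_def col_def lessThan_atLeast0 intro!: sum.cong)
    also have "\<dots> \<ge> 0" using Suc nn ij by (auto simp: nnm_def intro!: sum_nonneg)
    finally show "(M ^\<^sub>m Suc p) $$ (i,j) \<ge> 0" .
  qed
qed

lemma rearr_aux:
  fixes a x :: "nat \<Rightarrow> real"
  shows "finite I \<Longrightarrow> \<phi> permutes I \<Longrightarrow> (\<forall>j\<in>I. \<forall>k\<in>I. x k < x j \<longrightarrow> a k \<le> a j) \<Longrightarrow>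
    (\<Sum>j\<in>I. a (\<phi> j) * x j) \<le> (\<Sum>j\<in>I. a j * x j)"
proof (induction "card I" arbitrary: I \<phi> rule: less_induct)
  case less
  show ?case
  proof (cases "I = {}")
    case True then show ?thesis by simp
  next
    case False
    define M where "M = Max (x ` I)"
    define I' where "I' = {j\<in>I. x j = M}"
    have MI: "M \<in> x ` I" unfolding M_def using less.prems(1) False by auto
    have finI': "finite I'" "I' \<noteq> {}" using MI less.prems(1) unfolding I'_def by auto
    define m where "m = (SOME m. m \<in> I' \<and> a m = Max (a ` I'))"
    have "Max (a ` I') \<in> a ` I'" using finI' by auto
    then have "\<exists>m. m \<in> I' \<and> a m = Max (a ` I')" by auto
    then have m: "m \<in> I'" "a m = Max (a ` I')" unfolding m_def by (metis (mono_tags, lifting) someI_ex)+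
    have mI: "m \<in> I" and xm: "x m = M" using m unfolding I'_def by auto
    have xle: "\<forall>q\<in>I. x q \<le> x m" using xm less.prems(1) unfolding M_def by auto
    have ale: "\<forall>p\<in>I. a p \<le> a m"
    proof
      fix p assume p: "p \<in> I"
      show "a p \<le> a m"
      proof (cases "x p < x m")
        case True then show ?thesis using less.prems(3) p mI by auto
      next
        case False
        then have "p \<in> I'" using xle p xm unfolding I'_def by force
        then show ?thesis using m(2) finI' by auto
      qed
    qed
    have perm: "\<phi> permutes I" by fact
    obtain q where q: "q \<in> I" "\<phi> q = m"
      using perm mI by (metis permutes_def permutes_not_in)
    define \<psi> where "\<psi> = \<phi> \<circ> Transposition.transpose q m"
    have psiperm: "\<psi> permutes I" unfolding \<psi>_def
      by (rule permutes_compose[OF permutes_swap_id[OF q(1) mI] perm])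
    have psim: "\<psi> m = m" unfolding \<psi>_def using q by simp
    have psiperm': "\<psi> permutes (I - {m})"
      using psiperm psim unfolding permutes_def by (metis Diff_iff singletonD)
    have step1: "(\<Sum>j\<in>I. a (\<phi> j) * x j) \<le> (\<Sum>j\<in>I. a (\<psi> j) * x j)"
    proof (cases "q = m")
      case True then show ?thesis unfolding \<psi>_def by simp
    next
      case False
      have pI: "\<phi> m \<in> I" using perm mI by (simp add: permutes_in_image)
      have rest: "(\<Sum>j\<in>I - {q} - {m}. a (\<phi> j) * x j) = (\<Sum>j\<in>I - {q} - {m}. a (\<psi> j) * x j)"
        unfolding \<psi>_def by (intro sum.cong) (auto simp: transpose_def)
      have e1: "(\<Sum>j\<in>I. a (\<phi> j) * x j) = a m * x q + a (\<phi> m) * x m + (\<Sum>j\<in>I - {q} - {m}. a (\<phi> j) * x j)"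
        using less.prems(1) q mI False by (simp add: sum.remove[of I q] sum.remove[of "I - {q}" m])
      have e2: "(\<Sum>j\<in>I. a (\<psi> j) * x j) = a (\<phi> m) * x q + a m * x m + (\<Sum>j\<in>I - {q} - {m}. a (\<psi> j) * x j)"
        using less.prems(1) q mI False
        by (simp add: sum.remove[of I q] sum.remove[of "I - {q}" m] \<psi>_def)
      have "0 \<le> (a m - a (\<phi> m)) * (x m - x q)"
        using ale pI xle q(1) by (intro mult_nonneg_nonneg) auto
      then show ?thesis unfolding e1 e2 rest by (simp add: algebra_simps)
    qed
    have IH: "(\<Sum>j\<in>I - {m}. a (\<psi> j) * x j) \<le> (\<Sum>j\<in>I - {m}. a j * x j)"
      using less.hyps[of "I - {m}" \<psi>] less.prems mI psiperm'
      by (meson DiffD1 card_Diff1_less finite_Diff)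
    have "(\<Sum>j\<in>I. a (\<psi> j) * x j) = a m * x m + (\<Sum>j\<in>I - {m}. a (\<psi> j) * x j)"
      using less.prems(1) mI psim by (simp add: sum.remove[of I m])
    also have "\<dots> \<le> a m * x m + (\<Sum>j\<in>I - {m}. a j * x j)" using IH by simp
    also have "\<dots> = (\<Sum>j\<in>I. a j * x j)"
      using less.prems(1) mI by (simp add: sum.remove[of I m])
    finally show ?thesis using step1 by simp
  qed
qed


lemma ub1:
  fixes M :: "real mat" and v :: "complex vec"
  assumes M: "M \<in> carrier_mat n n" and nn: "nnm M n" and x: "x \<in> carrier_vec n"
    and xp: "\<forall>i<n. x $ i > 0" and le: "\<forall>l<n. (M *\<^sub>v x) $ l \<le> s * x $ l"
    and v: "v \<in> carrier_vec n" "v \<noteq> 0\<^sub>v n"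
    and ev: "map_mat complex_of_real M *\<^sub>v v = \<mu> \<cdot>\<^sub>v v"
  shows "norm \<mu> \<le> s"
proof -
  define f where "f q = norm (v $ q) / x $ q" for q
  define \<tau> where "\<tau> = Max (f ` {..<n})"
  obtain q0 where q0: "q0 < n" "v $ q0 \<noteq> 0"
    using v by (metis eq_vecI carrier_vecD index_zero_vec(1,2))
  then have n: "n > 0" by auto
  have "\<tau> \<in> f ` {..<n}" unfolding \<tau>_def using n by (intro Max_in) auto
  then obtain l where l: "l < n" "\<tau> = f l" by auto
  have fle: "\<And>q. q < n \<Longrightarrow> norm (v $ q) \<le> \<tau> * x $ q"
  proof -
    fix q assume q: "q < n"
    have "f q \<le> \<tau>" unfolding \<tau>_def using q by (intro Max_ge) auto
    then show "norm (v $ q) \<le> \<tau> * x $ q" using xp q unfolding f_def by (simp add: field_simps)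
  qed
  have "f q0 > 0" unfolding f_def using q0 xp by auto
  moreover have "f q0 \<le> \<tau>" unfolding \<tau>_def using q0 by (intro Max_ge) auto
  ultimately have tpos: "\<tau> > 0" by simp
  have xl: "x $ l > 0" using l xp by auto
  have vl: "norm (v $ l) = \<tau> * x $ l" using l xl unfolding f_def by simp
  have "norm \<mu> * norm (v $ l) = norm ((map_mat complex_of_real M *\<^sub>v v) $ l)"
    using ev l v by (simp add: norm_mult)
  also have "\<dots> = norm (\<Sum>q<n. complex_of_real (M $$ (l,q)) * v $ q)"
    using M v l by (subst mv[of _ n]) auto
  also have "\<dots> \<le> (\<Sum>q<n. norm (complex_of_real (M $$ (l,q)) * v $ q))" by (rule norm_sum)
  also have "\<dots> = (\<Sum>q<n. M $$ (l,q) * norm (v $ q))"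
    using nn l by (intro sum.cong) (auto simp: norm_mult nnm_def)
  also have "\<dots> \<le> (\<Sum>q<n. M $$ (l,q) * (\<tau> * x $ q))"
    using nn l fle by (intro sum_mono mult_left_mono) (auto simp: nnm_def)
  also have "\<dots> = \<tau> * (\<Sum>q<n. M $$ (l,q) * x $ q)" by (simp add: sum_distrib_left algebra_simps)
  also have "\<dots> = \<tau> * (M *\<^sub>v x) $ l" by (simp only: mv[OF M x l(1)])
  also have "\<dots> \<le> \<tau> * (s * x $ l)" using le l tpos by simp
  finally have "norm \<mu> * (\<tau> * x $ l) \<le> s * (\<tau> * x $ l)" unfolding vl by (simp add: algebra_simps)
  moreover have "\<tau> * x $ l > 0" using tpos xp l by simp
  ultimately show ?thesis using mult_le_cancel_right_pos by blast
qed

lemma ub: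
  fixes B :: "real mat"
  assumes B: "B \<in> carrier_mat n n" and nn: "nnm B n" and x: "x \<in> carrier_vec n"
    and xp: "\<forall>i<n. x $ i > 0" and le: "\<forall>l<n. (B ^\<^sub>m N *\<^sub>v x) $ l \<le> s * x $ l"
    and ev: "eigenvalue (map_mat complex_of_real B) \<mu>"
  shows "norm \<mu> ^ N \<le> s"
proof -
  obtain v where v: "eigenvector (map_mat complex_of_real B) v \<mu>" using ev unfolding eigenvalue_def by auto
  have Bc: "map_mat complex_of_real B \<in> carrier_mat n n" using B by simp
  have "map_mat complex_of_real B ^\<^sub>m N *\<^sub>v v = \<mu> ^ N \<cdot>\<^sub>v v" by (rule eigenvector_pow[OF Bc v])
  then have e: "map_mat complex_of_real (B ^\<^sub>m N) *\<^sub>v v = \<mu> ^ N \<cdot>\<^sub>v v"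
    by (simp add: of_real_hom.mat_hom_pow[OF B])
  have "norm (\<mu> ^ N) \<le> s"
    by (rule ub1[OF pow_carrier_mat[OF B] nnm_pow[OF B nn] x xp le _ _ e])
      (use v B in \<open>auto simp: eigenvector_def\<close>)
  then show ?thesis by (simp add: norm_power)
qed

lemma rho_nonneg: assumes "B \<in> carrier_mat n n" "n > 0" shows "rho B \<ge> 0"
proof -
  have "spectral_radius (map_mat complex_of_real B) \<in> norm ` spectrum (map_mat complex_of_real B)"
    using assms by (intro spectral_radius_mem_max(1)) auto
  then show ?thesis unfolding rho_def by auto
qed

lemma rho_le: assumes B: "B \<in> carrier_mat n n" "n > 0"
  and h: "\<And>\<mu>. eigenvalue (map_mat complex_of_real B) \<mu> \<Longrightarrow> norm \<mu> \<le> c"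
  shows "rho B \<le> c"
proof -
  have "spectral_radius (map_mat complex_of_real B) \<in> norm ` spectrum (map_mat complex_of_real B)"
    using assms by (intro spectral_radius_mem_max(1)) auto
  then show ?thesis unfolding rho_def using h by (auto simp: spectrum_def)
qed

lemma rho_lt: assumes B: "B \<in> carrier_mat n n" "n > 0"
  and h: "\<And>\<mu>. eigenvalue (map_mat complex_of_real B) \<mu> \<Longrightarrow> norm \<mu> < c"
  shows "rho B < c"
proof -
  have "spectral_radius (map_mat complex_of_real B) \<in> norm ` spectrum (map_mat complex_of_real B)"
    using assms by (intro spectral_radius_mem_max(1)) auto
  then show ?thesis unfolding rho_def using h by (auto simp: spectrum_def)
qed

lemma ev_le_rho: assumes B: "B \<in> carrier_mat n n"
  and ev: "eigenvalue (map_mat complex_of_real B) \<mu>"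
  shows "norm \<mu> \<le> rho B"
proof -
  have Bc: "map_mat complex_of_real B \<in> carrier_mat n n" using B by simp
  have n: "n > 0" using eigenvalue_imp_nonzero_dim[OF Bc ev] .
  show ?thesis unfolding rho_def
    by (rule spectral_radius_mem_max(2)[OF Bc n]) (use ev in \<open>auto simp: spectrum_def\<close>)
qed


lemma grow:
  fixes B :: "real mat"
  assumes B: "B \<in> carrier_mat n n" and nn: "nnm B n" and x: "x \<in> carrier_vec n"
    and xp: "\<forall>i<n. x $ i > 0" and n: "n > 0" and N: "N > 0" and s: "s > 0"
    and ge: "\<forall>l<n. s * x $ l \<le> (B ^\<^sub>m N *\<^sub>v x) $ l"
  shows "s \<le> rho B ^ N"
proof (rule ccontr)
  assume "\<not> s \<le> rho B ^ N"
  then have lt: "rho B ^ N < s" by simp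
  have r0: "rho B \<ge> 0" using rho_nonneg[OF B n] .
  define r where "r = root N s"
  have rN: "r ^ N = s" unfolding r_def using N s by (simp add: real_root_pow_pos2)
  have rpos: "r > 0" unfolding r_def using N s by simp
  have rhor: "rho B < r" using lt rN rpos by (metis power_less_imp_less_base less_le)
  define t where "t = (rho B + r) / 2"
  have t: "rho B < t" "t < r" "t > 0" using rhor r0 unfolding t_def by auto
  have tN: "t ^ N < s" using power_strict_mono[of t r N] t N rN by simp
  define C where "C = map_mat (\<lambda>a. complex_of_real (a / t)) B"
  have C: "C \<in> carrier_mat n n" unfolding C_def using B by simp
  have Bc: "map_mat complex_of_real B \<in> carrier_mat n n" using B by simp
  have evC: "norm \<mu> < 1" if ev: "eigenvalue C \<mu>" for \<mu>
  proof -
    obtain v where v: "v \<in> carrier_vec n" "v \<noteq> 0\<^sub>v n" "C *\<^sub>v v = \<mu> \<cdot>\<^sub>v v"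
      using ev C unfolding eigenvalue_def eigenvector_def by auto
    have "map_mat complex_of_real B *\<^sub>v v = (complex_of_real t * \<mu>) \<cdot>\<^sub>v v"
    proof (rule eq_vecI)
      fix l assume "l < dim_vec ((complex_of_real t * \<mu>) \<cdot>\<^sub>v v)"
      then have l: "l < n" using v by simp
      have "(map_mat complex_of_real B *\<^sub>v v) $ l = (\<Sum>q<n. complex_of_real (B $$ (l,q)) * v $ q)"
        using mv[OF Bc v(1) l] B l by simp
      also have "\<dots> = complex_of_real t * (\<Sum>q<n. complex_of_real (B $$ (l,q) / t) * v $ q)"
        using t(3) B l by (simp add: sum_distrib_left field_simps)
      also have "(\<Sum>q<n. complex_of_real (B $$ (l,q) / t) * v $ q) = (C *\<^sub>v v) $ l"
        using mv[OF C v(1) l] B l unfolding C_def by simp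
      also have "\<dots> = \<mu> * v $ l" using v l by simp
      finally show "(map_mat complex_of_real B *\<^sub>v v) $ l = ((complex_of_real t * \<mu>) \<cdot>\<^sub>v v) $ l"
        using v l by simp
    qed (use v B in auto)
    then have "eigenvalue (map_mat complex_of_real B) (complex_of_real t * \<mu>)"
      unfolding eigenvalue_def eigenvector_def using v B by auto
    then have "norm (complex_of_real t * \<mu>) \<le> rho B" by (rule ev_le_rho[OF B])
    then have "t * norm \<mu> \<le> rho B" using t(3) by (simp add: norm_mult)
    then have "t * norm \<mu> < t * 1" using t(1) by linarith
    then show ?thesis using t(3) by (simp only: mult_less_cancel_left_pos)
  qed
  have "spectral_radius C \<in> norm ` spectrum C" using spectral_radius_mem_max(1)[OF C n] .
  then have "spectral_radius C < 1" using evC by (auto simp: spectrum_def)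
  then obtain c where c: "\<And>k. norm_bound (C ^\<^sub>m k) c"
    using spectral_radius_jnf_norm_bound_less_1_upper_triangular[OF C] by auto
  define xc where "xc = map_vec complex_of_real x"
  have xc: "xc \<in> carrier_vec n" unfolding xc_def using x by simp
  have pw: "\<And>l. l < n \<Longrightarrow> (C ^\<^sub>m k *\<^sub>v xc) $ l = complex_of_real ((B ^\<^sub>m k *\<^sub>v x) $ l / t ^ k)" for k
  proof (induction k)
    case 0 then show ?case using C B x xc unfolding xc_def by simp
  next
    case (Suc k)
    have "(C ^\<^sub>m Suc k *\<^sub>v xc) $ l = (C *\<^sub>v (C ^\<^sub>m k *\<^sub>v xc)) $ l"
      using pow_Suc_left[OF C] C xc by (simp add: assoc_mult_mat_vec[of _ n n _ n])
    also have "\<dots> = (\<Sum>q<n. C $$ (l,q) * (C ^\<^sub>m k *\<^sub>v xc) $ q)"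
      by (rule mv[OF C mult_mat_vec_carrier[OF pow_carrier_mat[OF C] xc] Suc.prems])
    also have "\<dots> = (\<Sum>q<n. complex_of_real (B $$ (l,q) / t * ((B ^\<^sub>m k *\<^sub>v x) $ q / t ^ k)))"
      using Suc B unfolding C_def by (intro sum.cong) auto
    also have "\<dots> = complex_of_real ((\<Sum>q<n. B $$ (l,q) * (B ^\<^sub>m k *\<^sub>v x) $ q) / t ^ Suc k)"
      unfolding of_real_sum[symmetric] by (simp add: sum_divide_distrib field_simps)
    also have "(\<Sum>q<n. B $$ (l,q) * (B ^\<^sub>m k *\<^sub>v x) $ q) = (B *\<^sub>v (B ^\<^sub>m k *\<^sub>v x)) $ l"
      by (rule mv[OF B mult_mat_vec_carrier[OF pow_carrier_mat[OF B] x] Suc.prems, symmetric])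
    also have "B *\<^sub>v (B ^\<^sub>m k *\<^sub>v x) = B ^\<^sub>m Suc k *\<^sub>v x"
      using pow_Suc_left[OF B] B x by (simp add: assoc_mult_mat_vec[of _ n n _ n])
    finally show ?case .
  qed
  define X where "X = (\<Sum>q<n. x $ q)"
  have upper: "(B ^\<^sub>m k *\<^sub>v x) $ 0 \<le> c * X * t ^ k" for k
  proof -
    have "norm ((C ^\<^sub>m k *\<^sub>v xc) $ 0) = norm (\<Sum>q<n. (C ^\<^sub>m k) $$ (0,q) * xc $ q)"
      by (simp only: mv[OF pow_carrier_mat[OF C] xc n])
    also have "\<dots> \<le> (\<Sum>q<n. norm ((C ^\<^sub>m k) $$ (0,q) * xc $ q))" by (rule norm_sum)
    also have "\<dots> \<le> (\<Sum>q<n. c * x $ q)"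
    proof (intro sum_mono)
      fix q assume q: "q \<in> {..<n}"
      have "norm ((C ^\<^sub>m k) $$ (0,q)) \<le> c" using c[of k] q n C unfolding norm_bound_def by auto
      moreover have "norm (xc $ q) = x $ q" using q x xp unfolding xc_def by auto
      ultimately show "norm ((C ^\<^sub>m k) $$ (0,q) * xc $ q) \<le> c * x $ q"
        using xp q by (simp add: norm_mult mult_right_mono)
    qed
    finally have "norm ((C ^\<^sub>m k *\<^sub>v xc) $ 0) \<le> c * X" unfolding X_def by (simp add: sum_distrib_left)
    moreover have "norm ((C ^\<^sub>m k *\<^sub>v xc) $ 0) = \<bar>(B ^\<^sub>m k *\<^sub>v x) $ 0 / t ^ k\<bar>"
      by (simp only: pw[OF n] norm_of_real)
    ultimately have "\<bar>(B ^\<^sub>m k *\<^sub>v x) $ 0 / t ^ k\<bar> \<le> c * X" by simp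
    then have "(B ^\<^sub>m k *\<^sub>v x) $ 0 / t ^ k \<le> c * X" using abs_ge_self order_trans by blast
    then show ?thesis using t(3) by (simp add: divide_le_eq)
  qed
  have BN: "B ^\<^sub>m N \<in> carrier_mat n n" using B by simp
  have nnN: "nnm (B ^\<^sub>m N) n" using nnm_pow[OF B nn] .
  have lower: "\<And>l. l < n \<Longrightarrow> s ^ k * x $ l \<le> (B ^\<^sub>m (N * k) *\<^sub>v x) $ l" for k
  proof (induction k)
    case 0 then show ?case using B x by simp
  next
    case (Suc k)
    have eq: "B ^\<^sub>m (N * Suc k) *\<^sub>v x = B ^\<^sub>m N *\<^sub>v (B ^\<^sub>m (N * k) *\<^sub>v x)"
      using pow_add_mat[OF B, of N "N * k"] B x by (simp add: assoc_mult_mat_vec[of _ n n _ n])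
    have "(B ^\<^sub>m (N * Suc k) *\<^sub>v x) $ l = (\<Sum>q<n. (B ^\<^sub>m N) $$ (l,q) * (B ^\<^sub>m (N * k) *\<^sub>v x) $ q)"
      unfolding eq by (rule mv[OF BN mult_mat_vec_carrier[OF pow_carrier_mat[OF B] x] Suc.prems])
    also have "\<dots> \<ge> (\<Sum>q<n. (B ^\<^sub>m N) $$ (l,q) * (s ^ k * x $ q))"
      using Suc.IH nnN Suc.prems by (intro sum_mono mult_left_mono) (auto simp: nnm_def)
    finally have "(B ^\<^sub>m (N * Suc k) *\<^sub>v x) $ l \<ge> s ^ k * (\<Sum>q<n. (B ^\<^sub>m N) $$ (l,q) * x $ q)"
      by (simp add: sum_distrib_left algebra_simps)
    also have "(\<Sum>q<n. (B ^\<^sub>m N) $$ (l,q) * x $ q) = (B ^\<^sub>m N *\<^sub>v x) $ l"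
      by (simp only: mv[OF BN x Suc.prems])
    finally have "(B ^\<^sub>m (N * Suc k) *\<^sub>v x) $ l \<ge> s ^ k * (B ^\<^sub>m N *\<^sub>v x) $ l" .
    moreover have "s ^ k * (s * x $ l) \<le> s ^ k * (B ^\<^sub>m N *\<^sub>v x) $ l"
      using ge Suc.prems s by (intro mult_left_mono) auto
    ultimately show ?case by (simp add: algebra_simps)
  qed
  define q where "q = s / t ^ N"
  have q1: "q > 1" unfolding q_def using tN t(3) by simp
  have x0: "x $ 0 > 0" using xp n by auto
  obtain k where k: "c * X / x $ 0 < q ^ k" using real_arch_pow[OF q1] by blast
  have "s ^ k * x $ 0 \<le> c * X * t ^ (N * k)" using lower[OF n, of k] upper[of "N * k"] by simp
  then have "s ^ k * x $ 0 \<le> c * X * (t ^ N) ^ k" by (simp add: power_mult)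
  then have "(s ^ k / (t ^ N) ^ k) * x $ 0 \<le> c * X" using t(3) by (simp add: field_simps)
  then have "q ^ k * x $ 0 \<le> c * X" unfolding q_def by (simp add: power_divide)
  then have "q ^ k \<le> c * X / x $ 0" using x0 by (simp add: field_simps)
  then show False using k by simp
qed


lemma pow_entry_Suc: fixes M :: "real mat"
  assumes M: "M \<in> carrier_mat n n" and l: "l < n" and q: "q < n"
  shows "(M ^\<^sub>m Suc k) $$ (l,q) = (\<Sum>r<n. (M ^\<^sub>m k) $$ (l,r) * M $$ (r,q))"
  using M l q by (auto simp: scalar_prod_def row_def col_def lessThan_atLeast0 intro!: sum.cong)

lemma reach_lemma:
  fixes A B :: "real mat"
  assumes A: "A \<in> carrier_mat n n" and nnA: "nnm A n"
    and rows: "\<forall>l<n. l \<noteq> i \<longrightarrow> (\<forall>q<n. B $$ (l,q) = A $$ (l,q))"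
    and Si: "P i"
    and edge: "\<And>l q. l < n \<Longrightarrow> q < n \<Longrightarrow> B $$ (l,q) > 0 \<Longrightarrow> P q \<Longrightarrow> P l"
  shows "\<forall>l<n. \<forall>q<n. (A ^\<^sub>m k) $$ (l,q) > 0 \<longrightarrow> P q \<longrightarrow> P l"
proof (induction k)
  case 0 then show ?case using A by auto
next
  case (Suc k)
  show ?case
  proof (intro allI impI)
    fix l q assume l: "l < n" and q: "q < n" and pos: "(A ^\<^sub>m Suc k) $$ (l,q) > 0" and Pq: "P q"
    have "0 < (\<Sum>r<n. (A ^\<^sub>m k) $$ (l,r) * A $$ (r,q))" using pos pow_entry_Suc[OF A l q] by simp
    then obtain r where r: "r < n" "(A ^\<^sub>m k) $$ (l,r) * A $$ (r,q) > 0"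
      by (metis (no_types, lifting) lessThan_iff not_le sum_nonpos)
    have nnk: "(A ^\<^sub>m k) $$ (l,r) \<ge> 0" using nnm_pow[OF A nnA] l r unfolding nnm_def by auto
    have "A $$ (r,q) \<ge> 0" using nnA r q unfolding nnm_def by auto
    then have pk: "(A ^\<^sub>m k) $$ (l,r) > 0" and pa: "A $$ (r,q) > 0" using r(2) nnk
      by (auto simp: zero_less_mult_iff)
    have Pr: "P r"
    proof (cases "r = i")
      case True then show ?thesis using Si by simp
    next
      case False
      then have "B $$ (r,q) > 0" using rows r q pa by auto
      then show ?thesis using edge r q Pq by blast
    qed
    then show "P l" using Suc.IH l r pk by blast
  qed
qed

lemma all_reach:
  fixes A B :: "real mat"
  assumes A: "A \<in> carrier_mat n n" and nnA: "nnm A n" and irr: "irreducible_mat A"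
    and rows: "\<forall>l<n. l \<noteq> i \<longrightarrow> (\<forall>q<n. B $$ (l,q) = A $$ (l,q))"
    and i: "i < n" and Si: "P i"
    and edge: "\<And>l q. l < n \<Longrightarrow> q < n \<Longrightarrow> B $$ (l,q) > 0 \<Longrightarrow> P q \<Longrightarrow> P l"
  shows "\<forall>l<n. P l"
proof (intro allI impI)
  fix l assume l: "l < n"
  show "P l"
  proof (cases "l = i")
    case True then show ?thesis using Si by simp
  next
    case False
    then obtain k where "(A ^\<^sub>m k) $$ (l,i) > 0" using irr l i A unfolding irreducible_mat_def by auto
    then show ?thesis using reach_lemma[OF A nnA rows, of P k] Si edge l i by blast
  qed
qed

lemma uniform_N:
  fixes S :: "nat \<Rightarrow> nat \<Rightarrow> bool"
  assumes "\<forall>l<n. \<exists>p. S p l" and mono: "\<And>p p' l. l < n \<Longrightarrow> S p l \<Longrightarrow> p \<le> p' \<Longrightarrow> S p' l"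
  shows "\<exists>N>0. \<forall>l<n. S N l"
proof -
  from assms(1) obtain P where P: "\<forall>l<n. S (P l) l" by metis
  define N where "N = Suc (Max (P ` {..<n}))"
  have "\<forall>l<n. S N l"
  proof (intro allI impI)
    fix l assume l: "l < n"
    have "P l \<le> Max (P ` {..<n})" using l by (intro Max_ge) auto
    then show "S N l" using mono[OF l P[rule_format, OF l]] unfolding N_def by simp
  qed
  then show ?thesis unfolding N_def by blast
qed

lemma prop_gt:
  fixes A B :: "real mat"
  assumes A: "A \<in> carrier_mat n n" and B: "B \<in> carrier_mat n n" and nnA: "nnm A n" and nnB: "nnm B n"
    and rows: "\<forall>l<n. l \<noteq> i \<longrightarrow> (\<forall>q<n. B $$ (l,q) = A $$ (l,q))"
    and irr: "irreducible_mat A" and x: "x \<in> carrier_vec n" and xp: "\<forall>i<n. x $ i > 0"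
    and \<rho>: "\<rho> > 0" and i: "i < n"
    and ge: "\<forall>l<n. \<rho> * x $ l \<le> (B *\<^sub>v x) $ l" and gi: "\<rho> * x $ i < (B *\<^sub>v x) $ i"
  shows "\<exists>N>0. \<forall>l<n. \<rho> ^ N * x $ l < (B ^\<^sub>m N *\<^sub>v x) $ l"
proof -
  define S where "S p l \<longleftrightarrow> \<rho> ^ p * x $ l < (B ^\<^sub>m p *\<^sub>v x) $ l" for p l
  have Bp: "\<And>p. B ^\<^sub>m p *\<^sub>v x \<in> carrier_vec n" using mult_mat_vec_carrier[OF pow_carrier_mat[OF B] x] .
  have Bx: "B *\<^sub>v x \<in> carrier_vec n" using B x by simp
  have sucL: "B ^\<^sub>m Suc p *\<^sub>v x = B *\<^sub>v (B ^\<^sub>m p *\<^sub>v x)" for p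
    using pow_Suc_left[OF B] B x by (simp add: assoc_mult_mat_vec[of _ n n _ n])
  have sucR: "B ^\<^sub>m Suc p *\<^sub>v x = B ^\<^sub>m p *\<^sub>v (B *\<^sub>v x)" for p
    using B x by (simp add: assoc_mult_mat_vec[of _ n n _ n])
  have G: "\<forall>l<n. \<rho> ^ p * x $ l \<le> (B ^\<^sub>m p *\<^sub>v x) $ l" for p
  proof (induction p)
    case 0 then show ?case using B x by simp
  next
    case (Suc p)
    show ?case
    proof (intro allI impI)
      fix l assume l: "l < n"
      have "\<rho> ^ Suc p * x $ l = \<rho> ^ p * (\<rho> * x $ l)" by simp
      also have "\<dots> \<le> \<rho> ^ p * (B *\<^sub>v x) $ l" using ge l \<rho> by (intro mult_left_mono) auto
      also have "\<dots> = (\<Sum>q<n. B $$ (l,q) * (\<rho> ^ p * x $ q))"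
        by (simp only: mv[OF B x l] sum_distrib_left) (simp add: algebra_simps)
      also have "\<dots> \<le> (\<Sum>q<n. B $$ (l,q) * (B ^\<^sub>m p *\<^sub>v x) $ q)"
        using Suc.IH nnB l by (intro sum_mono mult_left_mono) (auto simp: nnm_def)
      also have "\<dots> = (B ^\<^sub>m Suc p *\<^sub>v x) $ l" unfolding sucL by (simp only: mv[OF B Bp l])
      finally show "\<rho> ^ Suc p * x $ l \<le> (B ^\<^sub>m Suc p *\<^sub>v x) $ l" .
    qed
  qed
  have nnBp: "nnm (B ^\<^sub>m p) n" for p using nnm_pow[OF B nnB] .
  have mono1: "S (Suc p) l" if l: "l < n" and Sp: "S p l" for p l
  proof -
    have "\<rho> ^ Suc p * x $ l = \<rho> * (\<rho> ^ p * x $ l)" by simp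
    also have "\<dots> < \<rho> * (B ^\<^sub>m p *\<^sub>v x) $ l" using Sp \<rho> unfolding S_def by simp
    also have "\<dots> = (\<Sum>q<n. (B ^\<^sub>m p) $$ (l,q) * (\<rho> * x $ q))"
      by (simp only: mv[OF pow_carrier_mat[OF B] x l] sum_distrib_left) (simp add: algebra_simps)
    also have "\<dots> \<le> (\<Sum>q<n. (B ^\<^sub>m p) $$ (l,q) * (B *\<^sub>v x) $ q)"
      using ge nnBp l by (intro sum_mono mult_left_mono) (auto simp: nnm_def)
    also have "\<dots> = (B ^\<^sub>m Suc p *\<^sub>v x) $ l" unfolding sucR by (simp only: mv[OF pow_carrier_mat[OF B] Bx l])
    finally show ?thesis unfolding S_def .
  qed
  have mono: "S p' l" if "l < n" "S p l" "p \<le> p'" for p p' l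
    using that(3,2) by (induction p' rule: dec_induct) (use mono1 that(1) in auto)
  have edge: "S (Suc p) l" if l: "l < n" and q: "q < n" and bq: "B $$ (l,q) > 0" and Sq: "S p q" for l q p
  proof -
    have "\<rho> ^ Suc p * x $ l = \<rho> ^ p * (\<rho> * x $ l)" by simp
    also have "\<dots> \<le> \<rho> ^ p * (B *\<^sub>v x) $ l" using ge l \<rho> by (intro mult_left_mono) auto
    also have "\<dots> = (\<Sum>q<n. B $$ (l,q) * (\<rho> ^ p * x $ q))"
      by (simp only: mv[OF B x l] sum_distrib_left) (simp add: algebra_simps)
    also have "\<dots> < (\<Sum>q<n. B $$ (l,q) * (B ^\<^sub>m p *\<^sub>v x) $ q)"
    proof (rule sum_strict_mono_ex1)
      show "\<forall>r\<in>{..<n}. B $$ (l,r) * (\<rho> ^ p * x $ r) \<le> B $$ (l,r) * (B ^\<^sub>m p *\<^sub>v x) $ r"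
        using G nnB l by (auto simp: nnm_def intro!: mult_left_mono)
      show "\<exists>r\<in>{..<n}. B $$ (l,r) * (\<rho> ^ p * x $ r) < B $$ (l,r) * (B ^\<^sub>m p *\<^sub>v x) $ r"
        using q bq Sq unfolding S_def by (intro bexI[of _ q]) auto
    qed simp
    also have "\<dots> = (B ^\<^sub>m Suc p *\<^sub>v x) $ l" unfolding sucL by (simp only: mv[OF B Bp l])
    finally show ?thesis unfolding S_def .
  qed
  have Si: "S 1 i" unfolding S_def using gi B x by simp
  have all: "\<forall>l<n. \<exists>p. S p l"
    by (rule all_reach[OF A nnA irr rows i, of "\<lambda>l. \<exists>p. S p l"]) (use Si edge in blast)+
  show ?thesis using uniform_N[of n S, OF all] mono unfolding S_def by blast
qed

lemma prop_lt:
  fixes A B :: "real mat"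
  assumes A: "A \<in> carrier_mat n n" and B: "B \<in> carrier_mat n n" and nnA: "nnm A n" and nnB: "nnm B n"
    and rows: "\<forall>l<n. l \<noteq> i \<longrightarrow> (\<forall>q<n. B $$ (l,q) = A $$ (l,q))"
    and irr: "irreducible_mat A" and x: "x \<in> carrier_vec n" and xp: "\<forall>i<n. x $ i > 0"
    and \<rho>: "\<rho> > 0" and i: "i < n"
    and ge: "\<forall>l<n. (B *\<^sub>v x) $ l \<le> \<rho> * x $ l" and gi: "(B *\<^sub>v x) $ i < \<rho> * x $ i"
  shows "\<exists>N>0. \<forall>l<n. (B ^\<^sub>m N *\<^sub>v x) $ l < \<rho> ^ N * x $ l"
proof -
  define S where "S p l \<longleftrightarrow> (B ^\<^sub>m p *\<^sub>v x) $ l < \<rho> ^ p * x $ l" for p l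
  have Bp: "\<And>p. B ^\<^sub>m p *\<^sub>v x \<in> carrier_vec n" using mult_mat_vec_carrier[OF pow_carrier_mat[OF B] x] .
  have Bx: "B *\<^sub>v x \<in> carrier_vec n" using B x by simp
  have sucL: "B ^\<^sub>m Suc p *\<^sub>v x = B *\<^sub>v (B ^\<^sub>m p *\<^sub>v x)" for p
    using pow_Suc_left[OF B] B x by (simp add: assoc_mult_mat_vec[of _ n n _ n])
  have sucR: "B ^\<^sub>m Suc p *\<^sub>v x = B ^\<^sub>m p *\<^sub>v (B *\<^sub>v x)" for p
    using B x by (simp add: assoc_mult_mat_vec[of _ n n _ n])
  have G: "\<forall>l<n. (B ^\<^sub>m p *\<^sub>v x) $ l \<le> \<rho> ^ p * x $ l" for p
  proof (induction p)
    case 0 then show ?case using B x by simp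
  next
    case (Suc p)
    show ?case
    proof (intro allI impI)
      fix l assume l: "l < n"
      have "(B ^\<^sub>m Suc p *\<^sub>v x) $ l = (\<Sum>q<n. B $$ (l,q) * (B ^\<^sub>m p *\<^sub>v x) $ q)" unfolding sucL by (simp only: mv[OF B Bp l])
      also have "\<dots> \<le> (\<Sum>q<n. B $$ (l,q) * (\<rho> ^ p * x $ q))"
        using Suc.IH nnB l by (intro sum_mono mult_left_mono) (auto simp: nnm_def)
      also have "\<dots> = \<rho> ^ p * (B *\<^sub>v x) $ l"
        by (simp only: mv[OF B x l] sum_distrib_left) (simp add: algebra_simps)
      also have "\<dots> \<le> \<rho> ^ p * (\<rho> * x $ l)" using ge l \<rho> by (intro mult_left_mono) auto
      also have "\<dots> = \<rho> ^ Suc p * x $ l" by simp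
      finally show "(B ^\<^sub>m Suc p *\<^sub>v x) $ l \<le> \<rho> ^ Suc p * x $ l" .
    qed
  qed
  have nnBp: "nnm (B ^\<^sub>m p) n" for p using nnm_pow[OF B nnB] .
  have mono1: "S (Suc p) l" if l: "l < n" and Sp: "S p l" for p l
  proof -
    have "(B ^\<^sub>m Suc p *\<^sub>v x) $ l = (\<Sum>q<n. (B ^\<^sub>m p) $$ (l,q) * (B *\<^sub>v x) $ q)" unfolding sucR by (simp only: mv[OF pow_carrier_mat[OF B] Bx l])
    also have "\<dots> \<le> (\<Sum>q<n. (B ^\<^sub>m p) $$ (l,q) * (\<rho> * x $ q))"
      using ge nnBp l by (intro sum_mono mult_left_mono) (auto simp: nnm_def)
    also have "\<dots> = \<rho> * (B ^\<^sub>m p *\<^sub>v x) $ l"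
      by (simp only: mv[OF pow_carrier_mat[OF B] x l] sum_distrib_left) (simp add: algebra_simps)
    also have "\<dots> < \<rho> * (\<rho> ^ p * x $ l)" using Sp \<rho> unfolding S_def by simp
    also have "\<dots> = \<rho> ^ Suc p * x $ l" by simp
    finally show ?thesis unfolding S_def .
  qed
  have mono: "S p' l" if "l < n" "S p l" "p \<le> p'" for p p' l
    using that(3,2) by (induction p' rule: dec_induct) (use mono1 that(1) in auto)
  have edge: "S (Suc p) l" if l: "l < n" and q: "q < n" and bq: "B $$ (l,q) > 0" and Sq: "S p q" for l q p
  proof -
    have "(B ^\<^sub>m Suc p *\<^sub>v x) $ l = (\<Sum>q<n. B $$ (l,q) * (B ^\<^sub>m p *\<^sub>v x) $ q)" unfolding sucL by (simp only: mv[OF B Bp l])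
    also have "\<dots> < (\<Sum>q<n. B $$ (l,q) * (\<rho> ^ p * x $ q))"
    proof (rule sum_strict_mono_ex1)
      show "\<forall>r\<in>{..<n}. B $$ (l,r) * (B ^\<^sub>m p *\<^sub>v x) $ r \<le> B $$ (l,r) * (\<rho> ^ p * x $ r)"
        using G nnB l by (auto simp: nnm_def intro!: mult_left_mono)
      show "\<exists>r\<in>{..<n}. B $$ (l,r) * (B ^\<^sub>m p *\<^sub>v x) $ r < B $$ (l,r) * (\<rho> ^ p * x $ r)"
        using q bq Sq unfolding S_def by (intro bexI[of _ q]) auto
    qed simp
    also have "\<dots> = \<rho> ^ p * (B *\<^sub>v x) $ l"
      by (simp only: mv[OF B x l] sum_distrib_left) (simp add: algebra_simps)
    also have "\<dots> \<le> \<rho> ^ p * (\<rho> * x $ l)" using ge l \<rho> by (intro mult_left_mono) auto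
    also have "\<dots> = \<rho> ^ Suc p * x $ l" by simp
    finally show ?thesis unfolding S_def .
  qed
  have Si: "S 1 i" unfolding S_def using gi B x by simp
  have all: "\<forall>l<n. \<exists>p. S p l"
    by (rule all_reach[OF A nnA irr rows i, of "\<lambda>l. \<exists>p. S p l"]) (use Si edge in blast)+
  show ?thesis using uniform_N[of n S, OF all] mono unfolding S_def by blast
qed



lemma nonneg_nnm: "A \<in> carrier_mat n n \<Longrightarrow> nonneg_mat A \<longleftrightarrow> nnm A n"
  unfolding nonneg_mat_def nnm_def by auto

lemma Omega_D: assumes A: "A \<in> carrier_mat n n" and B: "B \<in> Omega A"
  shows "B \<in> carrier_mat n n" "nnm B n"
    "\<And>l. l < n \<Longrightarrow> \<exists>\<phi>. \<phi> permutes {..<n} \<and> (\<forall>j<n. B $$ (l,j) = A $$ (l, \<phi> j))"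
  using A B unfolding Omega_def nonneg_mat_def nnm_def by auto

lemma A_in_Omega: assumes A: "A \<in> carrier_mat n n" and nn: "nonneg_mat A"
  shows "A \<in> Omega A"
  using A nn unfolding Omega_def by (auto intro!: exI[of _ id] permutes_id)

lemma Omega_finite: assumes A: "A \<in> carrier_mat n n" shows "finite (Omega A)"
proof -
  define D where "D = {..<n} \<times> {..<n}"
  define E where "E = (\<lambda>p. A $$ p) ` D"
  define g where "g B = restrict (\<lambda>p. B $$ p) D" for B :: "real mat"
  have "g ` Omega A \<subseteq> PiE D (\<lambda>_. E)"
  proof
    fix f assume "f \<in> g ` Omega A"
    then obtain B where B: "B \<in> Omega A" and f: "f = g B" by auto
    have "B $$ p \<in> E" if p: "p \<in> D" for p
    proof -
      obtain l j where lj: "p = (l,j)" "l < n" "j < n" using p unfolding D_def by auto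
      obtain \<phi> where \<phi>: "\<phi> permutes {..<n}" "\<forall>j<n. B $$ (l,j) = A $$ (l, \<phi> j)"
        using Omega_D(3)[OF A B lj(2)] by auto
      have "\<phi> j < n" using \<phi>(1) lj(3) by (metis lessThan_iff permutes_in_image)
      then show ?thesis unfolding E_def D_def using lj \<phi>(2) by auto
    qed
    then show "f \<in> PiE D (\<lambda>_. E)" unfolding f g_def by auto
  qed
  moreover have "finite (PiE D (\<lambda>_. E))" unfolding D_def E_def by (intro finite_PiE) auto
  ultimately have fin: "finite (g ` Omega A)" by (rule finite_subset)
  have "inj_on g (Omega A)"
  proof
    fix B B' assume B: "B \<in> Omega A" and B': "B' \<in> Omega A" and eq: "g B = g B'"
    have c: "B \<in> carrier_mat n n" "B' \<in> carrier_mat n n" using Omega_D(1)[OF A] B B' by auto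
    show "B = B'"
    proof (rule eq_matI)
      fix l j assume "l < dim_row B'" "j < dim_col B'"
      then have "(l,j) \<in> D" using c unfolding D_def by auto
      then show "B $$ (l,j) = B' $$ (l,j)" using fun_cong[OF eq, of "(l,j)"] unfolding g_def by auto
    qed (use c in auto)
  qed
  then show ?thesis using fin finite_imageD by blast
qed

definition swapm :: "real mat \<Rightarrow> nat \<Rightarrow> nat \<Rightarrow> nat \<Rightarrow> nat \<Rightarrow> real mat" where
  "swapm A n i j k = mat n n (\<lambda>(r,c). if r = i then A $$ (i, Transposition.transpose j k c) else A $$ (r,c))"

lemma swapm_props:
  assumes A: "A \<in> carrier_mat n n" and nn: "nonneg_mat A" and i: "i < n" and j: "j < n" and k: "k < n"
    and jk: "j \<noteq> k" and x: "x \<in> carrier_vec n"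
  shows "swapm A n i j k \<in> Omega A"
    "\<forall>l<n. l \<noteq> i \<longrightarrow> (\<forall>q<n. swapm A n i j k $$ (l,q) = A $$ (l,q))"
    "(swapm A n i j k *\<^sub>v x) $ i = (A *\<^sub>v x) $ i + (A $$ (i,k) - A $$ (i,j)) * (x $ j - x $ k)"
    "\<forall>l<n. l \<noteq> i \<longrightarrow> (swapm A n i j k *\<^sub>v x) $ l = (A *\<^sub>v x) $ l"
proof -
  let ?B = "swapm A n i j k"
  have Bc: "?B \<in> carrier_mat n n" unfolding swapm_def by simp
  have tin: "Transposition.transpose j k c < n" if "c < n" for c
    using that j k by (auto simp: transpose_def)
  show "?B \<in> Omega A" unfolding Omega_def
  proof (intro CollectI conjI allI impI)
    show "?B \<in> carrier_mat (dim_row A) (dim_col A)" using A unfolding swapm_def by simp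
    show "nonneg_mat ?B" using nn A tin unfolding nonneg_mat_def swapm_def by auto
    fix l assume "l < dim_row A"
    then have l: "l < n" using A by simp
    show "\<exists>\<phi>. \<phi> permutes {..<dim_col A} \<and> (\<forall>c<dim_col A. ?B $$ (l,c) = A $$ (l, \<phi> c))"
    proof (cases "l = i")
      case True
      then show ?thesis using A l j k unfolding swapm_def
        by (intro exI[of _ "Transposition.transpose j k"]) (auto intro: permutes_swap_id)
    next
      case False
      then show ?thesis using A l unfolding swapm_def by (intro exI[of _ id]) (auto intro: permutes_id)
    qed
  qed
  show "\<forall>l<n. l \<noteq> i \<longrightarrow> (\<forall>q<n. ?B $$ (l,q) = A $$ (l,q))" unfolding swapm_def by auto
  show "\<forall>l<n. l \<noteq> i \<longrightarrow> (?B *\<^sub>v x) $ l = (A *\<^sub>v x) $ l"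
  proof (intro allI impI)
    fix l assume l: "l < n" and li: "l \<noteq> i"
    have "(?B *\<^sub>v x) $ l = (\<Sum>q<n. ?B $$ (l,q) * x $ q)" by (rule mv[OF Bc x l])
    also have "\<dots> = (\<Sum>q<n. A $$ (l,q) * x $ q)" using l li by (intro sum.cong) (auto simp: swapm_def)
    also have "\<dots> = (A *\<^sub>v x) $ l" by (rule mv[OF A x l, symmetric])
    finally show "(?B *\<^sub>v x) $ l = (A *\<^sub>v x) $ l" .
  qed
  define f where "f c = (A $$ (i, Transposition.transpose j k c) - A $$ (i,c)) * x $ c" for c
  have "(?B *\<^sub>v x) $ i - (A *\<^sub>v x) $ i = (\<Sum>c<n. f c)"
    unfolding mv[OF Bc x i] mv[OF A x i] f_def sum_subtractf[symmetric]
    by (intro sum.cong) (auto simp: swapm_def i algebra_simps)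
  also have "\<dots> = f j + f k + (\<Sum>c\<in>{..<n} - {j} - {k}. f c)"
    using j k jk by (simp add: sum.remove[of "{..<n}" j] sum.remove[of "{..<n} - {j}" k])
  also have "(\<Sum>c\<in>{..<n} - {j} - {k}. f c) = 0" unfolding f_def
    by (intro sum.neutral) (auto simp: transpose_def)
  also have "f j + f k + 0 = (A $$ (i,k) - A $$ (i,j)) * (x $ j - x $ k)"
    unfolding f_def using jk by (simp add: algebra_simps)
  finally show "(?B *\<^sub>v x) $ i = (A *\<^sub>v x) $ i + (A $$ (i,k) - A $$ (i,j)) * (x $ j - x $ k)"
    by simp
qed


theorem theorem3p4:
  fixes A :: "real mat" and x :: "real vec" and n :: nat
  assumes "A \<in> carrier_mat n n"
    and "nonneg_mat A"
    and "irreducible_mat A"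
    and "perron_eigenvector A x"
    and "\<forall>i < n. x $ i > 0"
  shows "(rho A = Max (rho ` Omega A) \<longleftrightarrow>
           (\<forall>i < n. \<forall>j < n. \<forall>k < n. x $ k < x $ j \<longrightarrow> A $$ (i,k) \<le> A $$ (i,j)))
       \<and> (rho A = Min (rho ` Omega A) \<longleftrightarrow>
           (\<forall>i < n. \<forall>j < n. \<forall>k < n. x $ k < x $ j \<longrightarrow> A $$ (i,k) \<ge> A $$ (i,j)))"
proof -
  note A = assms(1) and nn = assms(2) and irr = assms(3) and xp = assms(5)
  have nnA: "nnm A n" using nonneg_nnm[OF A] nn by simp
  have x: "x \<in> carrier_vec n" using assms(4) A unfolding perron_eigenvector_def by simp
  define \<rho> where "\<rho> = rho A"
  have Ax: "\<And>l. l < n \<Longrightarrow> (A *\<^sub>v x) $ l = \<rho> * x $ l"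
    using assms(4) A x unfolding perron_eigenvector_def \<rho>_def by (metis carrier_vecD index_smult_vec(1))
  have fin: "finite (rho ` Omega A)" using Omega_finite[OF A] by simp
  have AO: "A \<in> Omega A" using A_in_Omega[OF A nn] .
  show ?thesis
  proof (cases "n = 0")
    case True
    have "Omega A = {A}"
    proof
      show "Omega A \<subseteq> {A}"
      proof
        fix B assume "B \<in> Omega A"
        then have "B \<in> carrier_mat n n" using Omega_D(1)[OF A] by simp
        then have "B = A" using A True by (intro eq_matI) auto
        then show "B \<in> {A}" by simp
      qed
    qed (use AO in simp)
    then show ?thesis using True by simp
  next
    case False
    then have n: "n > 0" by simp
    have BxO: "\<And>B l. B \<in> Omega A \<Longrightarrow> l < n \<Longrightarrow> \<exists>\<phi>. \<phi> permutes {..<n} \<and>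
        (B *\<^sub>v x) $ l = (\<Sum>j<n. A $$ (l, \<phi> j) * x $ j)"
    proof -
      fix B l assume B: "B \<in> Omega A" and l: "l < n"
      obtain \<phi> where \<phi>: "\<phi> permutes {..<n}" "\<forall>j<n. B $$ (l,j) = A $$ (l, \<phi> j)"
        using Omega_D(3)[OF A B l] by auto
      have "(B *\<^sub>v x) $ l = (\<Sum>j<n. B $$ (l,j) * x $ j)" by (rule mv[OF Omega_D(1)[OF A B] x l])
      also have "\<dots> = (\<Sum>j<n. A $$ (l, \<phi> j) * x $ j)" using \<phi>(2) by (intro sum.cong) auto
      finally show "\<exists>\<phi>. \<phi> permutes {..<n} \<and> (B *\<^sub>v x) $ l = (\<Sum>j<n. A $$ (l, \<phi> j) * x $ j)"
        using \<phi>(1) by blast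
    qed
    have Axs: "\<And>l. l < n \<Longrightarrow> (\<Sum>j<n. A $$ (l, j) * x $ j) = \<rho> * x $ l"
      using Ax mv[OF A x] by simp
    have max1: "rho A = Max (rho ` Omega A)"
      if cond: "\<forall>i < n. \<forall>j < n. \<forall>k < n. x $ k < x $ j \<longrightarrow> A $$ (i,k) \<le> A $$ (i,j)"
    proof -
      have "rho B \<le> \<rho>" if B: "B \<in> Omega A" for B
      proof -
        have Bc: "B \<in> carrier_mat n n" and nnB: "nnm B n" using Omega_D[OF A B] by auto
        have le: "\<forall>l<n. (B ^\<^sub>m 1 *\<^sub>v x) $ l \<le> \<rho> * x $ l"
        proof (intro allI impI)
          fix l assume l: "l < n"
          obtain \<phi> where \<phi>: "\<phi> permutes {..<n}" "(B *\<^sub>v x) $ l = (\<Sum>j<n. A $$ (l, \<phi> j) * x $ j)"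
            using BxO[OF B l] by blast
          have "(\<Sum>j<n. A $$ (l, \<phi> j) * x $ j) \<le> (\<Sum>j<n. A $$ (l, j) * x $ j)"
            using rearr_aux[of "{..<n}" \<phi> "\<lambda>j. x $ j" "\<lambda>j. A $$ (l,j)"] \<phi>(1) cond l by auto
          then show "(B ^\<^sub>m 1 *\<^sub>v x) $ l \<le> \<rho> * x $ l" using \<phi>(2) Axs[OF l] Bc by simp
        qed
        show ?thesis
        proof (rule rho_le[OF Bc n])
          fix \<mu> assume "eigenvalue (map_mat complex_of_real B) \<mu>"
          from ub[OF Bc nnB x xp le this] show "norm \<mu> \<le> \<rho>" by simp
        qed
      qed
      then show ?thesis unfolding \<rho>_def using fin AO by (intro Max_eqI[symmetric]) auto
    qed
    have max2: "\<forall>i < n. \<forall>j < n. \<forall>k < n. x $ k < x $ j \<longrightarrow> A $$ (i,k) \<le> A $$ (i,j)"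
      if eq: "rho A = Max (rho ` Omega A)"
    proof (rule ccontr)
      assume "\<not> ?thesis"
      then obtain i j k where ijk: "i < n" "j < n" "k < n" "x $ k < x $ j" "A $$ (i,k) > A $$ (i,j)"
        by auto
      have jk: "j \<noteq> k" using ijk(4) by auto
      define B where "B = swapm A n i j k"
      note sp = swapm_props[OF A nn ijk(1-3) jk x, folded B_def]
      have Bc: "B \<in> carrier_mat n n" and nnB: "nnm B n" using Omega_D[OF A sp(1)] by auto
      have rB: "rho B \<le> \<rho>" using eq fin sp(1) unfolding \<rho>_def by auto
      have delta: "(A $$ (i,k) - A $$ (i,j)) * (x $ j - x $ k) > 0" using ijk by simp
      have gi: "\<rho> * x $ i < (B *\<^sub>v x) $ i" using sp(3) Ax[OF ijk(1)] delta by simp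
      have ge: "\<forall>l<n. \<rho> * x $ l \<le> (B *\<^sub>v x) $ l"
        using sp(4) Ax gi by (metis order_less_imp_le order_refl)
      have "A $$ (i,k) * x $ k \<le> (\<Sum>q<n. A $$ (i,q) * x $ q)"
        proof (rule member_le_sum)
        show "\<And>q. q \<in> {..<n} - {k} \<Longrightarrow> 0 \<le> A $$ (i,q) * x $ q"
          using nnA xp ijk(1) unfolding nnm_def by (meson lessThan_iff DiffD1 less_imp_le mult_nonneg_nonneg)
      qed (use ijk in auto)
      moreover have "A $$ (i,k) * x $ k > 0" using ijk nnA xp unfolding nnm_def
        by (metis le_less_trans mult_pos_pos)
      ultimately have "\<rho> * x $ i > 0" using Axs[OF ijk(1)] by simp
      then have \<rho>pos: "\<rho> > 0" using xp ijk(1) by (auto simp: zero_less_mult_iff)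
      obtain N where N: "N > 0" "\<forall>l<n. \<rho> ^ N * x $ l < (B ^\<^sub>m N *\<^sub>v x) $ l"
        using prop_gt[OF A Bc nnA nnB sp(2) irr x xp \<rho>pos ijk(1) ge gi] by blast
      define r where "r l = (B ^\<^sub>m N *\<^sub>v x) $ l / x $ l" for l
      define s where "s = Min (r ` {..<n})"
      have "s \<in> r ` {..<n}" unfolding s_def using n by (intro Min_in) auto
      then obtain l0 where l0: "l0 < n" "s = r l0" by auto
      have sgt: "\<rho> ^ N < s" using N(2) l0 xp unfolding r_def by (simp add: field_simps)
      have sle: "\<forall>l<n. s * x $ l \<le> (B ^\<^sub>m N *\<^sub>v x) $ l"
      proof (intro allI impI)
        fix l assume l: "l < n"
        have "s \<le> r l" unfolding s_def using l by (intro Min_le) auto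
        then show "s * x $ l \<le> (B ^\<^sub>m N *\<^sub>v x) $ l" using xp l unfolding r_def by (simp add: field_simps)
      qed
      have "0 < \<rho> ^ N" using \<rho>pos by simp
      then have "s \<le> rho B ^ N"
        using grow[OF Bc nnB x xp n N(1) _ sle] sgt by linarith
      then have "\<rho> ^ N < rho B ^ N" using sgt by simp
      then have "\<rho> < rho B" using rho_nonneg[OF Bc n] by (metis power_less_imp_less_base)
      then show False using rB by simp
    qed
    have min1: "rho A = Min (rho ` Omega A)"
      if cond: "\<forall>i < n. \<forall>j < n. \<forall>k < n. x $ k < x $ j \<longrightarrow> A $$ (i,k) \<ge> A $$ (i,j)"
    proof -
      have "\<rho> \<le> rho B" if B: "B \<in> Omega A" for B
      proof -
        have Bc: "B \<in> carrier_mat n n" and nnB: "nnm B n" using Omega_D[OF A B] by auto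
        have ge: "\<forall>l<n. \<rho> * x $ l \<le> (B ^\<^sub>m 1 *\<^sub>v x) $ l"
        proof (intro allI impI)
          fix l assume l: "l < n"
          obtain \<phi> where \<phi>: "\<phi> permutes {..<n}" "(B *\<^sub>v x) $ l = (\<Sum>j<n. A $$ (l, \<phi> j) * x $ j)"
            using BxO[OF B l] by blast
          have "(\<Sum>j<n. - A $$ (l, \<phi> j) * x $ j) \<le> (\<Sum>j<n. - A $$ (l, j) * x $ j)"
            using rearr_aux[of "{..<n}" \<phi> "\<lambda>j. x $ j" "\<lambda>j. - A $$ (l,j)"] \<phi>(1) cond l by auto
          then have "(\<Sum>j<n. A $$ (l, j) * x $ j) \<le> (\<Sum>j<n. A $$ (l, \<phi> j) * x $ j)"
            by (simp add: sum_negf)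
          then show "\<rho> * x $ l \<le> (B ^\<^sub>m 1 *\<^sub>v x) $ l" using \<phi>(2) Axs[OF l] Bc by simp
        qed
        show ?thesis
        proof (cases "\<rho> > 0")
          case True
          from grow[OF Bc nnB x xp n _ True ge] show ?thesis by simp
        next
          case False
          then show ?thesis using rho_nonneg[OF Bc n] by simp
        qed
      qed
      then show ?thesis unfolding \<rho>_def using fin AO by (intro Min_eqI[symmetric]) auto
    qed
    have min2: "\<forall>i < n. \<forall>j < n. \<forall>k < n. x $ k < x $ j \<longrightarrow> A $$ (i,k) \<ge> A $$ (i,j)"
      if eq: "rho A = Min (rho ` Omega A)"
    proof (rule ccontr)
      assume "\<not> ?thesis"
      then obtain i j k where ijk: "i < n" "j < n" "k < n" "x $ k < x $ j" "A $$ (i,k) < A $$ (i,j)"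
        by auto
      have jk: "j \<noteq> k" using ijk(4) by auto
      define B where "B = swapm A n i j k"
      note sp = swapm_props[OF A nn ijk(1-3) jk x, folded B_def]
      have Bc: "B \<in> carrier_mat n n" and nnB: "nnm B n" using Omega_D[OF A sp(1)] by auto
      have rB: "\<rho> \<le> rho B" using eq fin sp(1) unfolding \<rho>_def by auto
      have delta: "(A $$ (i,k) - A $$ (i,j)) * (x $ j - x $ k) < 0" using ijk by (simp add: mult_neg_pos)
      have gi: "(B *\<^sub>v x) $ i < \<rho> * x $ i" using sp(3) Ax[OF ijk(1)] delta by simp
      have ge: "\<forall>l<n. (B *\<^sub>v x) $ l \<le> \<rho> * x $ l"
        using sp(4) Ax gi by (metis order_less_imp_le order_refl)
      have "A $$ (i,j) * x $ j \<le> (\<Sum>q<n. A $$ (i,q) * x $ q)"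
        proof (rule member_le_sum)
        show "\<And>q. q \<in> {..<n} - {j} \<Longrightarrow> 0 \<le> A $$ (i,q) * x $ q"
          using nnA xp ijk(1) unfolding nnm_def by (meson lessThan_iff DiffD1 less_imp_le mult_nonneg_nonneg)
      qed (use ijk in auto)
      moreover have "A $$ (i,j) * x $ j > 0" using ijk nnA xp unfolding nnm_def
        by (metis le_less_trans mult_pos_pos)
      ultimately have "\<rho> * x $ i > 0" using Axs[OF ijk(1)] by simp
      then have \<rho>pos: "\<rho> > 0" using xp ijk(1) by (auto simp: zero_less_mult_iff)
      obtain N where N: "N > 0" "\<forall>l<n. (B ^\<^sub>m N *\<^sub>v x) $ l < \<rho> ^ N * x $ l"
        using prop_lt[OF A Bc nnA nnB sp(2) irr x xp \<rho>pos ijk(1) ge gi] by blast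
      define r where "r l = (B ^\<^sub>m N *\<^sub>v x) $ l / x $ l" for l
      define s where "s = Max (r ` {..<n})"
      have "s \<in> r ` {..<n}" unfolding s_def using n by (intro Max_in) auto
      then obtain l0 where l0: "l0 < n" "s = r l0" by auto
      have slt: "s < \<rho> ^ N" using N(2) l0 xp unfolding r_def by (simp add: field_simps)
      have sle: "\<forall>l<n. (B ^\<^sub>m N *\<^sub>v x) $ l \<le> s * x $ l"
      proof (intro allI impI)
        fix l assume l: "l < n"
        have "r l \<le> s" unfolding s_def using l by (intro Max_ge) auto
        then show "(B ^\<^sub>m N *\<^sub>v x) $ l \<le> s * x $ l" using xp l unfolding r_def by (simp add: field_simps)
      qed
      have "rho B < \<rho>"
      proof (rule rho_lt[OF Bc n])
        fix \<mu> assume "eigenvalue (map_mat complex_of_real B) \<mu>"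
        from ub[OF Bc nnB x xp sle this] have "norm \<mu> ^ N < \<rho> ^ N" using slt by simp
        then show "norm \<mu> < \<rho>" using \<rho>pos by (metis less_le power_less_imp_less_base)
      qed
      then show False using rB by simp
    qed
    show ?thesis using max1 max2 min1 min2 unfolding \<rho>_def by blast
  qed
qed

end
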